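(* Let $\lambda_k,\varphi_k$ ($k=1,\dots,n$) be nonnegative integrable random variables on a probability space, and put $\lambda_0=0$. (i) If $\lambda_k=\mathbb{E}\sqrt{\varphi_k^2+\lambda_{k-1}^2}$ for $k=1,\dots,n$, then \[\max\big(\|(\varphi_k)_{k=1}^n\|_{L^1(\ell^2)},\|(\varphi_k)_{k=1}^n\|_{\mathrm{ind}}\big)\le2\lambda_n.\] (ii) If $\mathbb{E}\lambda_k\ge\mathbb{E}\sqrt{\varphi_k^2+\lambda_{k-1}^2}$ for $k=1,\dots,n$ and the $\lambda_k$ are bounded, then \[\max\big(\|(\varphi_k)_{k=1}^n\|_{L^1(\ell^2)},\|(\varphi_k)_{k=1}^n\|_{\mathrm{ind}}\big)\le(1+2^{1/2})\sqrt{\mathbb{E}\lambda_n}\sqrt{\max_{1\le k\le n}\sup\lambda_k}.\]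
   Context: For random variables $g_1,\dots,g_n$ on a probability space $(\Omega,\mu)$: $\|(g_k)\|_{L^1(\ell^2)}=\mathbb{E}(\sum_k|g_k|^2)^{1/2}$ and $\|(g_k)\|_{\mathrm{ind}}=\int_{\Omega^n}(\sum_k|g_k(\omega_k)|^2)^{1/2}d\mu(\omega_1)\cdots d\mu(\omega_n)$. In (i) the $\lambda_k$ are constants (for $k\ge1$). *)

theory Defs
  imports "HOL-Probability.Probability"
begin

definition L1l2_norm :: "'a measure \<Rightarrow> nat \<Rightarrow> (nat \<Rightarrow> 'a \<Rightarrow> real) \<Rightarrow> real" where
  "L1l2_norm M n g = (\<integral>\<omega>. sqrt (\<Sum>k=1..n. (g k \<omega>)^2) \<partial>M)"

definition ind_norm :: "'a measure \<Rightarrow> nat \<Rightarrow> (nat \<Rightarrow> 'a \<Rightarrow> real) \<Rightarrow> real" where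
  "ind_norm M n g = (\<integral>\<omega>. sqrt (\<Sum>k=1..n. (g k (\<omega> k))^2) \<partial>(PiM {1..n} (\<lambda>_. M)))"

end

theory Submission
  imports Defs
begin

lemma sqrt_sq_add_int:
  assumes "finite_measure N" "integrable N g" "g \<in> borel_measurable N"
  shows "integrable N (\<lambda>\<omega>. sqrt ((g \<omega>)^2 + c^2))"
proof (rule Bochner_Integration.integrable_bound[where f="\<lambda>\<omega>. \<bar>g \<omega>\<bar> + \<bar>c\<bar>"])
  show "integrable N (\<lambda>\<omega>. \<bar>g \<omega>\<bar> + \<bar>c\<bar>)" using assms by (intro Bochner_Integration.integrable_add integrable_abs finite_measure.integrable_const)
  show "(\<lambda>\<omega>. sqrt ((g \<omega>)^2 + c^2)) \<in> borel_measurable N" using assms by measurable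
  show "AE x in N. norm (sqrt ((g x)^2 + c^2)) \<le> norm (\<bar>g x\<bar> + \<bar>c\<bar>)"
  proof (rule AE_I2)
    fix x
    have "sqrt ((g x)^2 + c^2) \<le> \<bar>g x\<bar> + \<bar>c\<bar>"
      by (rule real_le_lsqrt) (auto simp: power2_eq_square abs_mult_self_eq algebra_simps)
    then show "norm (sqrt ((g x)^2 + c^2)) \<le> norm (\<bar>g x\<bar> + \<bar>c\<bar>)" by simp
  qed
qed

lemma key_tri:
  fixes a b s u :: real
  assumes "0 \<le> a" "0 \<le> b" "0 \<le> s" "sqrt s \<le> a + b"
  shows "sqrt (s + u^2) \<le> sqrt (u^2 + a^2) + b"
proof -
  have "s \<le> (a+b)^2" using assms by (metis real_sqrt_le_iff real_sqrt_pow2 real_sqrt_ge_zero power_mono)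
  hence "s + u^2 \<le> u^2 + a^2 + 2*b*a + b^2" by (simp add: power2_eq_square algebra_simps)
  also have "... \<le> (sqrt (u^2 + a^2) + b)^2"
  proof -
    have "a \<le> sqrt (u^2 + a^2)" using assms by (simp add: real_le_rsqrt)
    hence "2*b*a \<le> 2*b * sqrt (u^2+a^2)" using assms by (simp add: mult_left_mono)
    thus ?thesis by (simp add: power2_eq_square algebra_simps)
  qed
  finally show ?thesis
    using assms by (simp add: real_le_lsqrt add_nonneg_nonneg)
qed

lemma telesc: fixes l :: "nat \<Rightarrow> real" shows "(\<Sum>j=1..n. (l j - l (j-1))) = l n - l 0"
proof (induction n)
  case (Suc n) then show ?case by (simp add: sum.cl_ivl_Suc)
qed simp

lemma core_i:
  fixes n :: nat and l :: "nat \<Rightarrow> real" and g :: "nat \<Rightarrow> 'a \<Rightarrow> real"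
  assumes P: "prob_space N"
    and meas: "\<And>k. k\<in>{1..n} \<Longrightarrow> g k \<in> borel_measurable N"
    and int: "\<And>k. k\<in>{1..n} \<Longrightarrow> integrable N (g k)"
    and l0: "l 0 = 0"
    and lrec: "\<And>k. k\<in>{1..n} \<Longrightarrow> l k = (\<integral>\<omega>. sqrt ((g k \<omega>)^2 + (l (k-1))^2) \<partial>N)"
  shows "(\<integral>\<omega>. sqrt (\<Sum>k=1..n. (g k \<omega>)^2) \<partial>N) \<le> 2 * l n"
proof -
  interpret prob_space N by (rule P)
  have fm: "finite_measure N" by unfold_locales
  have isq: "\<And>k c. k\<in>{1..n} \<Longrightarrow> integrable N (\<lambda>\<omega>. sqrt ((g k \<omega>)^2 + c^2))"
    using sqrt_sq_add_int[OF fm] int meas by blast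
  have lnn: "0 \<le> l k" if "k \<le> n" for k
  proof (cases "k = 0")
    case True then show ?thesis using l0 by simp
  next
    case False
    then have "l k = (\<integral>\<omega>. sqrt ((g k \<omega>)^2 + (l (k-1))^2) \<partial>N)" using that False by (intro lrec) auto
    then show ?thesis by (auto intro!: integral_nonneg_AE)
  qed
  have lmono: "l (k-1) \<le> l k" if k: "k\<in>{1..n}" for k
  proof -
    have "l (k-1) = (\<integral>\<omega>. l (k-1) \<partial>N)" by (simp add: prob_space)
    also have "... \<le> (\<integral>\<omega>. sqrt ((g k \<omega>)^2 + (l (k-1))^2) \<partial>N)"
      using k isq[OF k] lnn[of "k-1"] by (intro integral_mono) (auto simp: real_le_rsqrt)
    finally show ?thesis using lrec[OF k] by simp
  qed
  define T where "T k \<omega> = (\<Sum>j=1..k. (sqrt ((g j \<omega>)^2 + (l (j-1))^2) - l (j-1)))" for k \<omega>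
  have Tnn: "0 \<le> T k \<omega>" if "k \<le> n" for k \<omega>
    unfolding T_def using that lnn by (intro sum_nonneg) (auto simp: real_le_rsqrt)
  have pw: "sqrt (\<Sum>j=1..k. (g j \<omega>)^2) \<le> T k \<omega> + l k" if "k \<le> n" for k \<omega>
    using that
  proof (induction k)
    case 0 then show ?case using l0 by (simp add: T_def)
  next
    case (Suc k)
    have "sqrt (\<Sum>j=1..Suc k. (g j \<omega>)^2) = sqrt ((\<Sum>j=1..k. (g j \<omega>)^2) + (g (Suc k) \<omega>)^2)"
      by simp
    also have "... \<le> sqrt ((g (Suc k) \<omega>)^2 + (l k)^2) + T k \<omega>"
      using Suc lnn[of k] Tnn[of k \<omega>] by (intro key_tri) (auto intro: sum_nonneg)
    also have "... = T (Suc k) \<omega> + l k" by (simp add: T_def)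
    also have "... \<le> T (Suc k) \<omega> + l (Suc k)" using lmono[of "Suc k"] Suc by simp
    finally show ?case .
  qed
  have intT: "integrable N (\<lambda>\<omega>. T n \<omega> + l n)"
    unfolding T_def using isq by (intro Bochner_Integration.integrable_add integrable_sum integrable_diff) auto
  have intS: "integrable N (\<lambda>\<omega>. sqrt (\<Sum>k=1..n. (g k \<omega>)^2))"
  proof (rule Bochner_Integration.integrable_bound[where f="\<lambda>\<omega>. \<Sum>k=1..n. \<bar>g k \<omega>\<bar>"])
    show "integrable N (\<lambda>\<omega>. \<Sum>k=1..n. \<bar>g k \<omega>\<bar>)" using int by auto
    show "(\<lambda>\<omega>. sqrt (\<Sum>k=1..n. (g k \<omega>)^2)) \<in> borel_measurable N" using meas by measurable
    show "AE x in N. norm (sqrt (\<Sum>k=1..n. (g k x)^2)) \<le> norm (\<Sum>k=1..n. \<bar>g k x\<bar>)"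
    proof (rule AE_I2)
      fix x
      have "sqrt (\<Sum>k=1..n. (g k x)^2) \<le> (\<Sum>k=1..n. \<bar>g k x\<bar>)"
        using L2_set_le_sum_abs[of "\<lambda>k. g k x" "{1..n}"] by (simp add: L2_set_def)
      moreover have "0 \<le> sqrt (\<Sum>k=1..n. (g k x)^2)" by (simp add: sum_nonneg)
      ultimately show "norm (sqrt (\<Sum>k=1..n. (g k x)^2)) \<le> norm (\<Sum>k=1..n. \<bar>g k x\<bar>)" by simp
    qed
  qed
  have "(\<integral>\<omega>. sqrt (\<Sum>k=1..n. (g k \<omega>)^2) \<partial>N) \<le> (\<integral>\<omega>. T n \<omega> + l n \<partial>N)"
    using intS intT pw by (intro integral_mono) auto
  also have "... = (\<Sum>j=1..n. ((\<integral>\<omega>. sqrt ((g j \<omega>)^2 + (l (j-1))^2) \<partial>N) - l (j-1))) + l n"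
    unfolding T_def using isq
    by (subst Bochner_Integration.integral_add) (auto intro!: integrable_sum integrable_diff simp: Bochner_Integration.integral_sum Bochner_Integration.integral_diff prob_space)
  also have "... = (\<Sum>j=1..n. (l j - l (j-1))) + l n" using lrec by simp
  also have "... = 2 * l n" using telesc[of l n] l0 by simp
  finally show ?thesis .
qed

lemma sq_step:
  fixes F f S u :: real
  assumes "0 \<le> F" "0 \<le> S" "f = sqrt (u^2 + S^2) - S" "x \<le> (F + S)^2 - S^2"
  shows "x + u^2 \<le> (F + f + S)^2 - S^2"
proof -
  have f0: "0 \<le> f" using assms by (simp add: real_le_rsqrt)
  have "(f + S)^2 = u^2 + S^2" using assms by simp
  hence "(F + f + S)^2 - S^2 = (F+S)^2 - S^2 + 2*F*f + u^2" by (simp add: power2_eq_square algebra_simps)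
  moreover have "0 \<le> 2*F*f" using f0 assms by simp
  ultimately show ?thesis using assms by linarith
qed

lemma amgm_t:
  fixes a t :: real assumes "0 \<le> a" "0 < t"
  shows "sqrt a \<le> (a / t + t) / 2"
proof -
  have "0 \<le> (sqrt a - t)^2" by simp
  hence "2 * t * sqrt a \<le> a + t^2" using assms by (simp add: power2_eq_square algebra_simps)
  thus ?thesis using assms by (simp add: field_simps power2_eq_square)
qed

lemma core_ii:
  fixes n :: nat and g :: "nat \<Rightarrow> 'a \<Rightarrow> real" and S m :: real
  assumes P: "prob_space N"
    and meas: "\<And>k. k\<in>{1..n} \<Longrightarrow> g k \<in> borel_measurable N"
    and int: "\<And>k. k\<in>{1..n} \<Longrightarrow> integrable N (g k)"
    and S0: "0 \<le> S" and mS: "m \<le> S"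
    and sumle: "(\<Sum>k=1..n. (\<integral>\<omega>. sqrt ((g k \<omega>)^2 + S^2) - S \<partial>N)) \<le> m"
  shows "(\<integral>\<omega>. sqrt (\<Sum>k=1..n. (g k \<omega>)^2) \<partial>N) \<le> (1 + sqrt 2) * sqrt m * sqrt S"
proof -
  interpret prob_space N by (rule P)
  have fm: "finite_measure N" by unfold_locales
  have isq: "integrable N (\<lambda>\<omega>. sqrt ((g k \<omega>)^2 + S^2) - S)" if "k\<in>{1..n}" for k
    using sqrt_sq_add_int[OF fm int[OF that] meas[OF that], of S] by auto
  define F where "F k \<omega> = (\<Sum>j=1..k. (sqrt ((g j \<omega>)^2 + S^2) - S))" for k \<omega>
  have Fnn: "0 \<le> F k \<omega>" for k \<omega>
    unfolding F_def using S0 by (intro sum_nonneg) (auto simp: real_le_rsqrt)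
  have intF: "integrable N (F n)" unfolding F_def using isq by auto
  have EF: "(\<integral>\<omega>. F n \<omega> \<partial>N) \<le> m"
    unfolding F_def using isq sumle by (subst Bochner_Integration.integral_sum) auto
  have m0: "0 \<le> m" using EF Fnn integral_nonneg_AE[of "F n" N] by (meson AE_I2 order_trans)
  have pw1: "(\<Sum>j=1..k. (g j \<omega>)^2) \<le> (F k \<omega> + S)^2 - S^2" for k \<omega>
  proof (induction k)
    case 0 then show ?case by (simp add: F_def)
  next
    case (Suc k)
    have "(\<Sum>j=1..Suc k. (g j \<omega>)^2) = (\<Sum>j=1..k. (g j \<omega>)^2) + (g (Suc k) \<omega>)^2" by simp
    also have "... \<le> (F k \<omega> + (sqrt ((g (Suc k) \<omega>)^2 + S^2) - S) + S)^2 - S^2"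
      by (rule sq_step[OF Fnn S0 refl Suc])
    also have "... = (F (Suc k) \<omega> + S)^2 - S^2" by (simp add: F_def)
    finally show ?case .
  qed
  have pw: "sqrt (\<Sum>k=1..n. (g k \<omega>)^2) \<le> F n \<omega> + sqrt (2 * S * F n \<omega>)" for \<omega>
  proof -
    have Fw: "0 \<le> F n \<omega>" by (rule Fnn)
    have "(\<Sum>k=1..n. (g k \<omega>)^2) \<le> (F n \<omega> + sqrt (2 * S * F n \<omega>))^2"
    proof -
      have c1: "(F n \<omega> + S)^2 - S^2 = (F n \<omega>)^2 + 2 * S * F n \<omega>" by (simp add: power2_eq_square algebra_simps)
      have c2: "(F n \<omega>)^2 + 2 * S * F n \<omega> \<le> (F n \<omega> + sqrt (2 * S * F n \<omega>))^2"
        using Fw S0 by (simp add: power2_eq_square algebra_simps)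
      have c3: "(\<Sum>k=1..n. (g k \<omega>)^2) \<le> (F n \<omega> + S)^2 - S^2" by (rule pw1)
      show ?thesis using c1 c2 c3 by linarith
    qed
    thus ?thesis using Fw S0 by (simp add: real_le_lsqrt sum_nonneg)
  qed
  have intS: "integrable N (\<lambda>\<omega>. sqrt (\<Sum>k=1..n. (g k \<omega>)^2))"
  proof (rule Bochner_Integration.integrable_bound[where f="\<lambda>\<omega>. \<Sum>k=1..n. \<bar>g k \<omega>\<bar>"])
    show "integrable N (\<lambda>\<omega>. \<Sum>k=1..n. \<bar>g k \<omega>\<bar>)" using int by auto
    show "(\<lambda>\<omega>. sqrt (\<Sum>k=1..n. (g k \<omega>)^2)) \<in> borel_measurable N" using meas by measurable
    show "AE x in N. norm (sqrt (\<Sum>k=1..n. (g k x)^2)) \<le> norm (\<Sum>k=1..n. \<bar>g k x\<bar>)"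
    proof (rule AE_I2)
      fix x
      have "sqrt (\<Sum>k=1..n. (g k x)^2) \<le> (\<Sum>k=1..n. \<bar>g k x\<bar>)"
        using L2_set_le_sum_abs[of "\<lambda>k. g k x" "{1..n}"] by (simp add: L2_set_def)
      moreover have "0 \<le> sqrt (\<Sum>k=1..n. (g k x)^2)" by (simp add: sum_nonneg)
      ultimately show "norm (sqrt (\<Sum>k=1..n. (g k x)^2)) \<le> norm (\<Sum>k=1..n. \<bar>g k x\<bar>)" by simp
    qed
  qed
  have bound_t: "(\<integral>\<omega>. sqrt (\<Sum>k=1..n. (g k \<omega>)^2) \<partial>N) \<le> m + S * m / t + t / 2" if t: "0 < t" for t
  proof -
    have "(\<integral>\<omega>. sqrt (\<Sum>k=1..n. (g k \<omega>)^2) \<partial>N) \<le> (\<integral>\<omega>. F n \<omega> + (2 * S * F n \<omega> / t + t) / 2 \<partial>N)"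
    proof (rule integral_mono[OF intS])
      show "integrable N (\<lambda>\<omega>. F n \<omega> + (2 * S * F n \<omega> / t + t) / 2)" using intF by auto
      fix \<omega> show "sqrt (\<Sum>k=1..n. (g k \<omega>)^2) \<le> F n \<omega> + (2 * S * F n \<omega> / t + t) / 2"
      proof -
        have "0 \<le> 2*S*F n \<omega>" using Fnn S0 by simp
        then have "sqrt (2*S*F n \<omega>) \<le> (2*S*F n \<omega>/t + t)/2" using amgm_t t by blast
        then show ?thesis using pw[of \<omega>] by linarith
      qed
    qed
    also have "... = (\<integral>\<omega>. F n \<omega> \<partial>N) * (1 + S / t) + t / 2"
      using intF by (simp add: prob_space field_simps)
    also have "... \<le> m * (1 + S / t) + t / 2"
      using EF t S0 by (intro add_right_mono mult_right_mono) auto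
    finally show ?thesis by (simp add: field_simps)
  qed
  show ?thesis
  proof (cases "m = 0")
    case True
    have "(\<integral>\<omega>. sqrt (\<Sum>k=1..n. (g k \<omega>)^2) \<partial>N) \<le> 0 + e" if "0 < e" for e
      using bound_t[of "2*e"] that True by simp
    hence "(\<integral>\<omega>. sqrt (\<Sum>k=1..n. (g k \<omega>)^2) \<partial>N) \<le> 0" by (rule field_le_epsilon)
    thus ?thesis using True by simp
  next
    case False
    hence mp: "0 < m" using m0 by simp
    hence Sp: "0 < S" using mS by simp
    define t where "t = sqrt (2 * S * m)"
    have tp: "0 < t" using mp Sp by (simp add: t_def)
    have tt: "t * t = 2 * S * m" using mp Sp by (simp add: t_def)
    have "S * m / t = t / 2" using tp tt by (simp add: field_simps)
    hence "(\<integral>\<omega>. sqrt (\<Sum>k=1..n. (g k \<omega>)^2) \<partial>N) \<le> m + t" using bound_t[OF tp] by simp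
    also have "m \<le> sqrt m * sqrt S"
    proof -
      have "sqrt m * sqrt m \<le> sqrt m * sqrt S" using mS m0 by (intro mult_left_mono) auto
      thus ?thesis using m0 by simp
    qed
    also have "t = sqrt 2 * sqrt m * sqrt S" by (simp add: t_def real_sqrt_mult)
    finally show ?thesis by (simp add: algebra_simps)
  qed
qed

lemma sqrt_sq_add_int2:
  assumes "finite_measure N" "integrable N g" "g \<in> borel_measurable N" "integrable N h" "h \<in> borel_measurable N"
  shows "integrable N (\<lambda>\<omega>. sqrt ((g \<omega>)^2 + (h \<omega>)^2))"
proof (rule Bochner_Integration.integrable_bound[where f="\<lambda>\<omega>. \<bar>g \<omega>\<bar> + \<bar>h \<omega>\<bar>"])
  show "integrable N (\<lambda>\<omega>. \<bar>g \<omega>\<bar> + \<bar>h \<omega>\<bar>)" using assms by auto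
  show "(\<lambda>\<omega>. sqrt ((g \<omega>)^2 + (h \<omega>)^2)) \<in> borel_measurable N" using assms by measurable
  show "AE x in N. norm (sqrt ((g x)^2 + (h x)^2)) \<le> norm (\<bar>g x\<bar> + \<bar>h x\<bar>)"
  proof (rule AE_I2)
    fix x
    have "sqrt ((g x)^2 + (h x)^2) \<le> \<bar>g x\<bar> + \<bar>h x\<bar>"
      by (rule real_le_lsqrt) (auto simp: power2_eq_square abs_mult_self_eq algebra_simps)
    then show "norm (sqrt ((g x)^2 + (h x)^2)) \<le> norm (\<bar>g x\<bar> + \<bar>h x\<bar>)" by simp
  qed
qed

lemma PiM_comp:
  fixes h :: "'a \<Rightarrow> real"
  assumes M: "prob_space M" and k: "k \<in> I" and h: "h \<in> borel_measurable M"
  shows "(\<integral>\<omega>. h (\<omega> k) \<partial>PiM I (\<lambda>_. M)) = (\<integral>x. h x \<partial>M)"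
    and "integrable M h \<Longrightarrow> integrable (PiM I (\<lambda>_. M)) (\<lambda>\<omega>. h (\<omega> k))"
proof -
  have D: "distr (PiM I (\<lambda>_. M)) M (\<lambda>\<omega>. \<omega> k) = M"
    using distr_PiM_component[of I "\<lambda>_. M" k] M k by simp
  have meas: "(\<lambda>\<omega>. \<omega> k) \<in> measurable (PiM I (\<lambda>_. M)) M"
    using k by (rule measurable_component_singleton)
  show "(\<integral>\<omega>. h (\<omega> k) \<partial>PiM I (\<lambda>_. M)) = (\<integral>x. h x \<partial>M)"
    using integral_distr[of "\<lambda>\<omega>. \<omega> k" "PiM I (\<lambda>_. M)" M h] meas h D by simp
  show "integrable M h \<Longrightarrow> integrable (PiM I (\<lambda>_. M)) (\<lambda>\<omega>. h (\<omega> k))"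
    using integrable_distr_eq[of "\<lambda>\<omega>. \<omega> k" "PiM I (\<lambda>_. M)" M h] meas h D by simp
qed

lemma sqS_le:
  fixes u L S :: real assumes "0 \<le> L" "L \<le> S"
  shows "sqrt (u^2 + S^2) - S \<le> sqrt (u^2 + L^2) - L"
  using key_tri[of L "S - L" "S^2" u] assms by (simp add: add.commute)

theorem lemma1p5:
  fixes M :: "'a measure" and n :: nat and \<phi> :: "nat \<Rightarrow> 'a \<Rightarrow> real"
  assumes "prob_space M"
    and "n \<ge> 1"
    and "\<And>k. k \<in> {1..n} \<Longrightarrow> \<phi> k \<in> borel_measurable M"
    and "\<And>k. k \<in> {1..n} \<Longrightarrow> integrable M (\<phi> k)"
    and "\<And>k \<omega>. k \<in> {1..n} \<Longrightarrow> \<omega> \<in> space M \<Longrightarrow> \<phi> k \<omega> \<ge> 0"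
  shows
    "(\<forall>l :: nat \<Rightarrow> real.
        l 0 = 0 \<and>
        (\<forall>k\<in>{1..n}. l k = (\<integral>\<omega>. sqrt ((\<phi> k \<omega>)^2 + (l (k - 1))^2) \<partial>M))
        \<longrightarrow> max (L1l2_norm M n \<phi>) (ind_norm M n \<phi>) \<le> 2 * l n)
     \<and>
     (\<forall>L :: nat \<Rightarrow> 'a \<Rightarrow> real.
        L 0 = (\<lambda>_. 0) \<and>
        (\<forall>k\<in>{1..n}. L k \<in> borel_measurable M \<and> integrable M (L k)) \<and>
        (\<forall>k\<in>{1..n}. \<forall>\<omega>\<in>space M. L k \<omega> \<ge> 0) \<and>
        (\<exists>B. \<forall>k\<in>{1..n}. \<forall>\<omega>\<in>space M. L k \<omega> \<le> B) \<and>
        (\<forall>k\<in>{1..n}. (\<integral>\<omega>. L k \<omega> \<partial>M) \<ge>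
                       (\<integral>\<omega>. sqrt ((\<phi> k \<omega>)^2 + (L (k - 1) \<omega>)^2) \<partial>M))
        \<longrightarrow> max (L1l2_norm M n \<phi>) (ind_norm M n \<phi>)
              \<le> (1 + sqrt 2) * sqrt (\<integral>\<omega>. L n \<omega> \<partial>M)
                 * sqrt (Max ((\<lambda>k. SUP \<omega>\<in>space M. L k \<omega>) ` {1..n})))"
proof -
  note P = assms(1) and meas = assms(3) and int = assms(4)
  interpret prob_space M by (rule P)
  have fm: "finite_measure M" by unfold_locales
  define N where "N = PiM {1..n} (\<lambda>_. M)"
  have PN: "prob_space N" unfolding N_def using P by (intro prob_space_PiM)
  define g where "g k \<omega> = \<phi> k (\<omega> k)" for k and \<omega> :: "nat \<Rightarrow> 'a"
  have gmeas: "g k \<in> borel_measurable N" if k: "k \<in> {1..n}" for k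
  proof -
    have "(\<lambda>\<omega>. \<omega> k) \<in> measurable N M" unfolding N_def using k by (rule measurable_component_singleton)
    then show ?thesis unfolding g_def using meas[OF k] by (rule measurable_compose)
  qed
  have gint: "integrable N (g k)" if k: "k \<in> {1..n}" for k
    unfolding g_def N_def using PiM_comp(2)[OF P k meas[OF k] int[OF k]] .
  have transf: "(\<integral>\<omega>. h (g k \<omega>) \<partial>N) = (\<integral>x. h (\<phi> k x) \<partial>M)"
    if k: "k \<in> {1..n}" and h: "h \<in> borel_measurable borel" for k and h :: "real \<Rightarrow> real"
  proof -
    have "(\<lambda>x. h (\<phi> k x)) \<in> borel_measurable M" using h meas[OF k] by measurable
    then show ?thesis unfolding g_def N_def by (rule PiM_comp(1)[OF P k])
  qed
  have L1eq: "L1l2_norm M n \<phi> = (\<integral>\<omega>. sqrt (\<Sum>k=1..n. (\<phi> k \<omega>)^2) \<partial>M)"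
    by (simp add: L1l2_norm_def)
  have indeq: "ind_norm M n \<phi> = (\<integral>\<omega>. sqrt (\<Sum>k=1..n. (g k \<omega>)^2) \<partial>N)"
    by (simp add: ind_norm_def g_def N_def)
  show ?thesis
  proof (intro conjI allI impI)
    fix l :: "nat \<Rightarrow> real"
    assume H: "l 0 = 0 \<and> (\<forall>k\<in>{1..n}. l k = (\<integral>\<omega>. sqrt ((\<phi> k \<omega>)^2 + (l (k - 1))^2) \<partial>M))"
    have a: "L1l2_norm M n \<phi> \<le> 2 * l n"
      unfolding L1eq using H by (intro core_i[OF P meas int]) auto
    have b: "ind_norm M n \<phi> \<le> 2 * l n"
      unfolding indeq
    proof (rule core_i[OF PN gmeas gint])
      show "l 0 = 0" using H by simp
      fix k assume k: "k \<in> {1..n}"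
      have "(\<integral>\<omega>. sqrt ((g k \<omega>)^2 + (l (k-1))^2) \<partial>N) = (\<integral>x. sqrt ((\<phi> k x)^2 + (l (k-1))^2) \<partial>M)"
        using k by (intro transf) auto
      then show "l k = (\<integral>\<omega>. sqrt ((g k \<omega>)^2 + (l (k-1))^2) \<partial>N)" using H k by simp
    qed auto
    show "max (L1l2_norm M n \<phi>) (ind_norm M n \<phi>) \<le> 2 * l n" using a b by simp
  next
    fix L :: "nat \<Rightarrow> 'a \<Rightarrow> real"
    assume H: "L 0 = (\<lambda>_. 0) \<and>
        (\<forall>k\<in>{1..n}. L k \<in> borel_measurable M \<and> integrable M (L k)) \<and>
        (\<forall>k\<in>{1..n}. \<forall>\<omega>\<in>space M. L k \<omega> \<ge> 0) \<and>
        (\<exists>B. \<forall>k\<in>{1..n}. \<forall>\<omega>\<in>space M. L k \<omega> \<le> B) \<and>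
        (\<forall>k\<in>{1..n}. (\<integral>\<omega>. L k \<omega> \<partial>M) \<ge>
                       (\<integral>\<omega>. sqrt ((\<phi> k \<omega>)^2 + (L (k - 1) \<omega>)^2) \<partial>M))"
    then have L0: "L 0 = (\<lambda>_. 0)"
      and Lm: "\<And>k. k\<in>{1..n} \<Longrightarrow> L k \<in> borel_measurable M"
      and Li: "\<And>k. k\<in>{1..n} \<Longrightarrow> integrable M (L k)"
      and Lnn: "\<And>k \<omega>. k\<in>{1..n} \<Longrightarrow> \<omega>\<in>space M \<Longrightarrow> L k \<omega> \<ge> 0"
      and Lrec: "\<And>k. k\<in>{1..n} \<Longrightarrow> (\<integral>\<omega>. L k \<omega> \<partial>M) \<ge> (\<integral>\<omega>. sqrt ((\<phi> k \<omega>)^2 + (L (k - 1) \<omega>)^2) \<partial>M)"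
      by auto
    from H obtain B where B: "\<And>k \<omega>. k\<in>{1..n} \<Longrightarrow> \<omega>\<in>space M \<Longrightarrow> L k \<omega> \<le> B" by blast
    define S where "S = Max ((\<lambda>k. SUP \<omega>\<in>space M. L k \<omega>) ` {1..n})"
    have ne: "space M \<noteq> {}" by (rule not_empty)
    have LS: "L k \<omega> \<le> S" if k: "k\<in>{1..n}" and w: "\<omega> \<in> space M" for k \<omega>
    proof -
      have "bdd_above (L k ` space M)" using B[OF k] by (auto intro!: bdd_aboveI[where M=B])
      then have "L k \<omega> \<le> (SUP \<omega>\<in>space M. L k \<omega>)" using w by (rule cSUP_upper2) simp
      also have "... \<le> S" unfolding S_def using k by (intro Max_ge) auto
      finally show ?thesis .
    qed
    obtain \<omega>0 where w0: "\<omega>0 \<in> space M" using ne by auto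
    have S0: "0 \<le> S" using Lnn[of 1 \<omega>0] LS[of 1 \<omega>0] w0 assms(2) by auto
    have Lm': "L j \<in> borel_measurable M" and Li': "integrable M (L j)"
      and Lnn': "\<And>\<omega>. \<omega>\<in>space M \<Longrightarrow> 0 \<le> L j \<omega>" and LS': "\<And>\<omega>. \<omega>\<in>space M \<Longrightarrow> L j \<omega> \<le> S"
      if "j \<le> n" for j
      using that Lm[of j] Li[of j] Lnn[of j] LS[of j] L0 S0 by (cases "j = 0"; auto)+
    define m where "m = (\<integral>\<omega>. L n \<omega> \<partial>M)"
    have mS: "m \<le> S"
    proof -
      have "m \<le> (\<integral>\<omega>. S \<partial>M)" unfolding m_def
        using Li' LS' by (intro integral_mono) auto
      then show ?thesis by (simp add: prob_space)
    qed
    have trm: "(\<integral>\<omega>. sqrt ((\<phi> k \<omega>)^2 + S^2) - S \<partial>M) \<le> (\<integral>\<omega>. L k \<omega> \<partial>M) - (\<integral>\<omega>. L (k-1) \<omega> \<partial>M)"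
      if k: "k \<in> {1..n}" for k
    proof -
      have km: "k - 1 \<le> n" using k by auto
      have i1: "integrable M (\<lambda>\<omega>. sqrt ((\<phi> k \<omega>)^2 + (L (k-1) \<omega>)^2))"
        using sqrt_sq_add_int2[OF fm int[OF k] meas[OF k] Li'[OF km] Lm'[OF km]] .
      have i2: "integrable M (\<lambda>\<omega>. sqrt ((\<phi> k \<omega>)^2 + S^2) - S)"
        using sqrt_sq_add_int[OF fm int[OF k] meas[OF k], of S] by auto
      have "(\<integral>\<omega>. sqrt ((\<phi> k \<omega>)^2 + S^2) - S \<partial>M) \<le> (\<integral>\<omega>. sqrt ((\<phi> k \<omega>)^2 + (L (k-1) \<omega>)^2) - L (k-1) \<omega> \<partial>M)"
        using i1 i2 Li'[OF km] Lnn'[OF km] LS'[OF km] by (intro integral_mono sqS_le) auto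
      also have "... = (\<integral>\<omega>. sqrt ((\<phi> k \<omega>)^2 + (L (k-1) \<omega>)^2) \<partial>M) - (\<integral>\<omega>. L (k-1) \<omega> \<partial>M)"
        using i1 Li'[OF km] by (rule Bochner_Integration.integral_diff)
      also have "... \<le> (\<integral>\<omega>. L k \<omega> \<partial>M) - (\<integral>\<omega>. L (k-1) \<omega> \<partial>M)" using Lrec[OF k] by simp
      finally show ?thesis .
    qed
    have sumle: "(\<Sum>k=1..n. (\<integral>\<omega>. sqrt ((\<phi> k \<omega>)^2 + S^2) - S \<partial>M)) \<le> m"
    proof -
      have "(\<Sum>k=1..n. (\<integral>\<omega>. sqrt ((\<phi> k \<omega>)^2 + S^2) - S \<partial>M))
          \<le> (\<Sum>k=1..n. ((\<lambda>j. \<integral>\<omega>. L j \<omega> \<partial>M) k - (\<lambda>j. \<integral>\<omega>. L j \<omega> \<partial>M) (k-1)))"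
        using trm by (intro sum_mono) auto
      also have "... = m" unfolding m_def by (subst telesc) (simp add: L0)
      finally show ?thesis .
    qed
    have a: "L1l2_norm M n \<phi> \<le> (1 + sqrt 2) * sqrt m * sqrt S"
      unfolding L1eq by (rule core_ii[OF P meas int S0 mS sumle])
    have b: "ind_norm M n \<phi> \<le> (1 + sqrt 2) * sqrt m * sqrt S"
      unfolding indeq
    proof (rule core_ii[OF PN gmeas gint S0 mS])
      have "(\<integral>\<omega>. sqrt ((g k \<omega>)^2 + S^2) - S \<partial>N) = (\<integral>\<omega>. sqrt ((\<phi> k \<omega>)^2 + S^2) - S \<partial>M)"
        if k: "k \<in> {1..n}" for k
        using transf[OF k, of "\<lambda>x. sqrt (x^2 + S^2) - S"] by simp
      then show "(\<Sum>k=1..n. (\<integral>\<omega>. sqrt ((g k \<omega>)^2 + S^2) - S \<partial>N)) \<le> m"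
        using sumle by simp
    qed auto
    show "max (L1l2_norm M n \<phi>) (ind_norm M n \<phi>)
              \<le> (1 + sqrt 2) * sqrt (\<integral>\<omega>. L n \<omega> \<partial>M)
                 * sqrt (Max ((\<lambda>k. SUP \<omega>\<in>space M. L k \<omega>) ` {1..n}))"
      using a b unfolding m_def S_def by simp
  qed
qed

end
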